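(* Let $n\geq 2$ and let $(A,\cdot,[\cdot,\ldots,\cdot])$ be a transposed Poisson $n$-Lie algebra. Then $(A,\cdot,[\cdot,\ldots,\cdot])$ is simple if and only if the $n$-Lie algebra $(A,[\cdot,\ldots,\cdot])$ is simple.
   Context: An $n$-Lie algebra is a vector space $L$ with an $n$-linear skew-symmetric bracket satisfying $[[x_1,\ldots,x_n],y_2,\ldots,y_n]=\sum_{i=1}^n[x_1,\ldots,x_{i-1},[x_i,y_2,\ldots,y_n],x_{i+1},\ldots,x_n]$; an ideal is a subspace $I$ with $[I,A,\ldots,A]\subseteq I$, and it is simple if $[A,\ldots,A]\neq 0$ and its only ideals are $0$ and $A$. A transposed Poisson $n$-Lie algebra (over $\mathbb{C}$) is a triple $(A,\cdot,[\cdot,\ldots,\cdot])$ where $(A,\cdot)$ is commutative associative, $(A,[\cdot,\ldots,\cdot])$ is an $n$-Lie algebra, and $n\,h\,[a_1,\ldots,a_n]=\sum_{i=1}^n[a_1,\ldots,h a_i,\ldots,a_n]$ for all $h,a_i\in A$. An ideal of it is a subspace $J$ with $A\cdot J\subseteq J$ and $[J,A,\ldots,A]\subseteq J$; it is simple if $[A,\ldots,A]\neq 0$ and its only ideals are $0$ and $A$. *)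

theory Defs
  imports Complex_Main
begin

text \<open>An n-ary bracket is a function br on lists; only its values on lists of length n matter.
  Arguments are indexed 0..n-1.\<close>

definition multilinear_n :: "(complex \<Rightarrow> 'a::ab_group_add \<Rightarrow> 'a) \<Rightarrow> nat \<Rightarrow> ('a list \<Rightarrow> 'a) \<Rightarrow> bool" where
  "multilinear_n sc n br \<longleftrightarrow>
     (\<forall>xs i a b. length xs = n \<longrightarrow> i < n \<longrightarrow>
        br (xs[i := a + b]) = br (xs[i := a]) + br (xs[i := b])) \<and>
     (\<forall>xs i c a. length xs = n \<longrightarrow> i < n \<longrightarrow>
        br (xs[i := sc c a]) = sc c (br (xs[i := a])))"

definition skew_symmetric_n :: "nat \<Rightarrow> ('a::ab_group_add list \<Rightarrow> 'a) \<Rightarrow> bool" where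
  "skew_symmetric_n n br \<longleftrightarrow>
     (\<forall>xs i j. length xs = n \<longrightarrow> i < j \<longrightarrow> j < n \<longrightarrow>
        br (xs[i := xs ! j, j := xs ! i]) = - br xs)"

definition filippov_identity :: "nat \<Rightarrow> ('a::ab_group_add list \<Rightarrow> 'a) \<Rightarrow> bool" where
  "filippov_identity n br \<longleftrightarrow>
     (\<forall>xs ys. length xs = n \<longrightarrow> length ys = n - 1 \<longrightarrow>
        br (br xs # ys) = (\<Sum>i<n. br (xs[i := br ((xs ! i) # ys)])))"

definition n_Lie_algebra :: "(complex \<Rightarrow> 'a::ab_group_add \<Rightarrow> 'a) \<Rightarrow> nat \<Rightarrow> ('a list \<Rightarrow> 'a) \<Rightarrow> bool" where
  "n_Lie_algebra sc n br \<longleftrightarrow> vector_space sc \<and> multilinear_n sc n br \<and>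
     skew_symmetric_n n br \<and> filippov_identity n br"

definition n_Lie_ideal :: "(complex \<Rightarrow> 'a::ab_group_add \<Rightarrow> 'a) \<Rightarrow> nat \<Rightarrow> ('a list \<Rightarrow> 'a) \<Rightarrow> 'a set \<Rightarrow> bool" where
  "n_Lie_ideal sc n br I \<longleftrightarrow> module.subspace sc I \<and>
     (\<forall>x\<in>I. \<forall>ys. length ys = n - 1 \<longrightarrow> br (x # ys) \<in> I)"

definition nontrivial_bracket :: "nat \<Rightarrow> ('a::zero list \<Rightarrow> 'a) \<Rightarrow> bool" where
  "nontrivial_bracket n br \<longleftrightarrow> (\<exists>xs. length xs = n \<and> br xs \<noteq> 0)"

definition simple_n_Lie :: "(complex \<Rightarrow> 'a::ab_group_add \<Rightarrow> 'a) \<Rightarrow> nat \<Rightarrow> ('a list \<Rightarrow> 'a) \<Rightarrow> bool" where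
  "simple_n_Lie sc n br \<longleftrightarrow> nontrivial_bracket n br \<and>
     (\<forall>I. n_Lie_ideal sc n br I \<longrightarrow> I = {0} \<or> I = UNIV)"

text \<open>Commutative associative algebra over C: the type carries a commutative ring
  structure (no unit required), and the product is compatible with scalars
  (bilinearity then follows from distributivity and commutativity).\<close>
definition comm_assoc_algebra :: "(complex \<Rightarrow> 'a::comm_ring \<Rightarrow> 'a) \<Rightarrow> bool" where
  "comm_assoc_algebra sc \<longleftrightarrow> vector_space sc \<and> (\<forall>c a b. sc c (a * b) = sc c a * b)"

definition transposed_Poisson_n_Lie :: "(complex \<Rightarrow> 'a::comm_ring \<Rightarrow> 'a) \<Rightarrow> nat \<Rightarrow> ('a list \<Rightarrow> 'a) \<Rightarrow> bool" where
  "transposed_Poisson_n_Lie sc n br \<longleftrightarrow> comm_assoc_algebra sc \<and> n_Lie_algebra sc n br \<and>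
     (\<forall>h xs. length xs = n \<longrightarrow>
        sc (of_nat n) (h * br xs) = (\<Sum>i<n. br (xs[i := h * (xs ! i)])))"

definition TP_ideal :: "(complex \<Rightarrow> 'a::comm_ring \<Rightarrow> 'a) \<Rightarrow> nat \<Rightarrow> ('a list \<Rightarrow> 'a) \<Rightarrow> 'a set \<Rightarrow> bool" where
  "TP_ideal sc n br J \<longleftrightarrow> module.subspace sc J \<and> (\<forall>h. \<forall>x\<in>J. h * x \<in> J) \<and>
     (\<forall>x\<in>J. \<forall>ys. length ys = n - 1 \<longrightarrow> br (x # ys) \<in> J)"

definition simple_TP_n_Lie :: "(complex \<Rightarrow> 'a::comm_ring \<Rightarrow> 'a) \<Rightarrow> nat \<Rightarrow> ('a list \<Rightarrow> 'a) \<Rightarrow> bool" where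
  "simple_TP_n_Lie sc n br \<longleftrightarrow> nontrivial_bracket n br \<and>
     (\<forall>J. TP_ideal sc n br J \<longrightarrow> J = {0} \<or> J = UNIV)"

end

theory Submission
  imports Defs
begin

locale tpl =
  fixes sc :: "complex \<Rightarrow> 'a::comm_ring \<Rightarrow> 'a" and n :: nat and br :: "'a list \<Rightarrow> 'a"
  assumes n2: "n \<ge> 2" and tp: "transposed_Poisson_n_Lie sc n br"
begin

lemma vs: "vector_space sc"
  using tp by (simp add: transposed_Poisson_n_Lie_def comm_assoc_algebra_def)

sublocale module sc
  using vs by (simp add: module_iff_vector_space)

lemma ml: "multilinear_n sc n br"
  using tp by (simp add: transposed_Poisson_n_Lie_def n_Lie_algebra_def)

lemma br_add: "length xs = n \<Longrightarrow> i < n \<Longrightarrow> br (xs[i := a + b]) = br (xs[i := a]) + br (xs[i := b])"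
  using ml by (simp add: multilinear_n_def)

lemma br_scale: "length xs = n \<Longrightarrow> i < n \<Longrightarrow> br (xs[i := sc c a]) = sc c (br (xs[i := a]))"
  using ml by (simp add: multilinear_n_def)

lemma br_zero: "length xs = n \<Longrightarrow> i < n \<Longrightarrow> br (xs[i := 0]) = 0"
  using br_scale[of xs i 0 0] by simp

lemma br_diff: "length xs = n \<Longrightarrow> i < n \<Longrightarrow> br (xs[i := a - b]) = br (xs[i := a]) - br (xs[i := b])"
  using br_add[of xs i "a - b" b] by (simp add: algebra_simps)

lemma skew: "length xs = n \<Longrightarrow> i < j \<Longrightarrow> j < n \<Longrightarrow> br (xs[i := xs ! j, j := xs ! i]) = - br xs"
  using tp by (simp add: transposed_Poisson_n_Lie_def n_Lie_algebra_def skew_symmetric_n_def)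

lemma fil: "length xs = n \<Longrightarrow> length ys = n - 1 \<Longrightarrow>
        br (br xs # ys) = (\<Sum>i<n. br (xs[i := br ((xs ! i) # ys)]))"
  using tp by (simp add: transposed_Poisson_n_Lie_def n_Lie_algebra_def filippov_identity_def)

lemma tpid: "length xs = n \<Longrightarrow> sc (of_nat n) (h * br xs) = (\<Sum>i<n. br (xs[i := h * (xs ! i)]))"
  using tp by (simp add: transposed_Poisson_n_Lie_def)

lemma msc: "sc c (a * b) = sc c a * b"
  using tp by (simp add: transposed_Poisson_n_Lie_def comm_assoc_algebra_def)

lemma msc_r: "h * sc c a = sc c (h * a)"
proof -
  have "sc c (h * a) = sc c (a * h)" by (simp add: mult.commute)
  also have "\<dots> = sc c a * h" by (rule msc)
  finally show ?thesis by (simp add: mult.commute)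
qed

lemma ninv: "sc (inverse (of_nat n)) (sc (of_nat n) y) = y"
  using n2 by simp

lemma n1inv: "sc (inverse (of_nat n - 1)) (sc (of_nat n - 1) y) = y"
proof -
  have "(of_nat n :: complex) \<noteq> 1" using n2 by simp
  then have "(of_nat n - 1 :: complex) \<noteq> 0" by simp
  then show ?thesis by simp
qed

lemma sum_except:
  assumes "subspace I" "finite K" "k \<in> K" "\<And>j. j \<in> K \<Longrightarrow> j \<noteq> k \<Longrightarrow> f j \<in> I"
  shows "sum f K - f k \<in> I"
proof -
  have "sum f K = f k + sum f (K - {k})" using assms(2,3) by (simp add: sum.remove)
  then show ?thesis using assms by (auto intro!: subspace_sum)
qed

lemma slot:
  assumes I: "n_Lie_ideal sc n br I" and L: "length L = n" "j < n" "L ! j \<in> I"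
  shows "br L \<in> I"
proof -
  have sI: "subspace I" and id: "\<And>x ys. x \<in> I \<Longrightarrow> length ys = n - 1 \<Longrightarrow> br (x # ys) \<in> I"
    using I by (auto simp: n_Lie_ideal_def)
  have gen: "br M \<in> I" if "length M = n" "M ! 0 \<in> I" for M
  proof -
    have "M \<noteq> []" using that n2 by auto
    then have "M = M ! 0 # tl M" by (cases M) auto
    then show ?thesis using id[of "M ! 0" "tl M"] that by simp
  qed
  show ?thesis
  proof (cases "j = 0")
    case True then show ?thesis using gen L by simp
  next
    case False
    let ?M = "L[0 := L ! j, j := L ! 0]"
    have "br ?M = - br L" using skew[of L 0 j] L False by simp
    moreover have "br ?M \<in> I" using gen[of ?M] L False by simp
    ultimately show ?thesis using subspace_neg[OF sI, of "br ?M"] by simp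
  qed
qed

lemma tp_slot:
  assumes I: "n_Lie_ideal sc n br I" and L: "length L = n" "k < n" "L ! k \<in> I"
  shows "sc (of_nat n) (h * br L) - br (L[k := h * (L ! k)]) \<in> I"
proof -
  have sI: "subspace I" using I by (simp add: n_Lie_ideal_def)
  have "(\<Sum>i<n. br (L[i := h * (L ! i)])) - br (L[k := h * (L ! k)]) \<in> I"
  proof (rule sum_except[OF sI])
    fix j assume "j \<in> {..<n}" "j \<noteq> k"
    then show "br (L[j := h * (L ! j)]) \<in> I"
      using slot[OF I, of "L[j := h * (L ! j)]" k] L by simp
  qed (use L in auto)
  then show ?thesis using tpid[OF L(1)] by simp
qed

lemma tp_slot1:
  assumes I: "n_Lie_ideal sc n br I" and x: "x \<in> I" and ws: "length ws = n - 2"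
  shows "sc (of_nat n) (h * br (a # x # ws)) - br (a # (h * x) # ws) \<in> I"
  using tp_slot[OF I, of "a # x # ws" "Suc 0" h] x ws n2 by simp

lemma tp_slot0:
  assumes I: "n_Lie_ideal sc n br I" and x: "x \<in> I" and ys: "length ys = n - 1"
  shows "sc (of_nat n) (h * br (x # ys)) - br ((h * x) # ys) \<in> I"
  using tp_slot[OF I, of "x # ys" 0 h] x ys n2 by simp

lemma key:
  assumes I: "n_Lie_ideal sc n br I" and x: "x \<in> I" and zs: "length zs = n"
    and ws: "length ws = n - 2"
  shows "br (br zs # (h * x) # ws) \<in> I"
proof -
  have sI: "subspace I" using I by (simp add: n_Lie_ideal_def)
  define N where "N = (of_nat n :: complex)"
  define E where "E = br (br zs # x # ws)"
  define v where "v = br (br zs # (h * x) # ws)"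
  define u where "u i = br (zs ! i # x # ws)" for i
  define w where "w i = br (zs ! i # (h * x) # ws)" for i
  have lys: "length (x # ws) = n - 1" "length ((h * x) # ws) = n - 1" using ws n2 by auto
  have a: "sc N (h * E) - v \<in> I" unfolding N_def E_def v_def by (rule tp_slot1[OF I x ws])
  have uI: "u i \<in> I" if "i < n" for i
    unfolding u_def using slot[OF I, of "zs ! i # x # ws" "Suc 0"] ws n2 x by simp
  have E: "E = (\<Sum>i<n. br (zs[i := u i]))" unfolding E_def u_def using fil[OF zs lys(1)] by simp
  have V: "v = (\<Sum>i<n. br (zs[i := w i]))" unfolding v_def w_def using fil[OF zs lys(2)] by simp
  have b: "sc N (h * br (zs[i := u i])) - br (zs[i := h * u i]) \<in> I" if i: "i < n" for i
    using tp_slot[OF I, of "zs[i := u i]" i h] zs i uI[OF i] unfolding N_def by simp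
  have c: "sc N (br (zs[i := h * u i])) - br (zs[i := w i]) \<in> I" if i: "i < n" for i
  proof -
    define r where "r = sc N (h * u i) - w i"
    have rI: "r \<in> I" unfolding r_def N_def u_def w_def by (rule tp_slot1[OF I x ws])
    have "sc N (br (zs[i := h * u i])) = br (zs[i := sc N (h * u i)])"
      using br_scale zs i by simp
    also have "sc N (h * u i) = w i + r" unfolding r_def by simp
    also have "br (zs[i := w i + r]) = br (zs[i := w i]) + br (zs[i := r])"
      using br_add zs i by simp
    finally have "sc N (br (zs[i := h * u i])) - br (zs[i := w i]) = br (zs[i := r])" by simp
    moreover have "br (zs[i := r]) \<in> I" using slot[OF I, of "zs[i := r]" i] zs i rI by simp
    ultimately show ?thesis by simp
  qed
  have "sc N (sc N (h * E)) - v =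
     (\<Sum>i<n. sc N (sc N (h * br (zs[i := u i])) - br (zs[i := h * u i]))
            + (sc N (br (zs[i := h * u i])) - br (zs[i := w i])))"
    unfolding E V by (simp add: sum_distrib_left scale_sum_right sum_subtractf sum.distrib
        scale_right_diff_distrib del: scale_scale)
  also have "\<dots> \<in> I"
    by (rule subspace_sum[OF sI]) (auto intro!: subspace_add[OF sI] subspace_scale[OF sI] b c)
  finally have d: "sc N (sc N (h * E)) - v \<in> I" .
  have e: "sc N (sc N (h * E)) - sc N v \<in> I"
    using subspace_scale[OF sI a, of N] by (simp add: scale_right_diff_distrib del: scale_scale)
  have "sc (N - 1) v = (sc N (sc N (h * E)) - v) - (sc N (sc N (h * E)) - sc N v)"
    by (simp add: scale_left_diff_distrib del: scale_scale)
  also have "\<dots> \<in> I" using d e by (rule subspace_diff[OF sI])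
  finally have "sc (inverse (N - 1)) (sc (N - 1) v) \<in> I" by (rule subspace_scale[OF sI])
  then show ?thesis using n1inv unfolding N_def v_def by simp
qed

lemma key2:
  assumes I: "n_Lie_ideal sc n br I" and x: "x \<in> I" and zs: "length zs = n"
    and ws: "length ws = n - 2"
  shows "h * br (x # br zs # ws) \<in> I"
proof -
  have sI: "subspace I" using I by (simp add: n_Lie_ideal_def)
  have v: "br (br zs # (h * x) # ws) \<in> I" by (rule key[OF I x zs ws])
  have len: "length (br zs # (h * x) # ws) = n" using ws n2 by simp
  have "br ((h * x) # br zs # ws) = - br (br zs # (h * x) # ws)"
    using skew[OF len, of 0 "Suc 0"] n2 by simp
  then have hx: "br ((h * x) # br zs # ws) \<in> I" using subspace_neg[OF sI v] by simp
  have "sc (of_nat n) (h * br (x # br zs # ws)) - br ((h * x) # br zs # ws) \<in> I"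
    by (rule tp_slot0[OF I x]) (use ws n2 in simp)
  then have "sc (of_nat n) (h * br (x # br zs # ws)) \<in> I"
    using subspace_add[OF sI _ hx] by fastforce
  then have "sc (inverse (of_nat n)) (sc (of_nat n) (h * br (x # br zs # ws))) \<in> I"
    by (rule subspace_scale[OF sI])
  then show ?thesis using ninv by simp
qed


lemma span_all:
  assumes simp: "simple_TP_n_Lie sc n br"
  shows "span {br zs | zs. length zs = n} = UNIV"
proof -
  let ?B = "{br zs | zs. length zs = n}"
  define T where "T = {s. \<forall>h. h * s \<in> span ?B}"
  have sT: "subspace T" unfolding subspace_def T_def
    by (auto simp: distrib_left msc_r intro!: span_zero span_add span_scale)
  have BT: "?B \<subseteq> T"
  proof
    fix b assume "b \<in> ?B"
    then obtain zs where zs: "length zs = n" "b = br zs" by auto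
    show "b \<in> T" unfolding T_def
    proof (intro CollectI allI)
      fix h
      have "sc (of_nat n) (h * br zs) \<in> span ?B"
        unfolding tpid[OF zs(1)] by (rule span_sum) (auto intro!: span_base simp: zs)
      then have "sc (inverse (of_nat n)) (sc (of_nat n) (h * br zs)) \<in> span ?B"
        by (rule span_scale)
      then show "h * b \<in> span ?B" using ninv zs by simp
    qed
  qed
  have prod: "h * s \<in> span ?B" if "s \<in> span ?B" for h s
    using span_minimal[OF BT sT] that unfolding T_def by auto
  have br_cl: "br (s # ys) \<in> span ?B" if "length ys = n - 1" for s ys
    using that n2 by (intro span_base) (auto intro!: exI[of _ "s # ys"])
  have "TP_ideal sc n br (span ?B)"
    unfolding TP_ideal_def using prod br_cl by auto
  then have "span ?B = {0} \<or> span ?B = UNIV" using simp by (simp add: simple_TP_n_Lie_def)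
  moreover obtain xs where "length xs = n" "br xs \<noteq> 0"
    using simp by (auto simp: simple_TP_n_Lie_def nontrivial_bracket_def)
  then have "br xs \<in> span ?B" "br xs \<noteq> 0" by (auto intro!: span_base)
  ultimately show ?thesis by auto
qed

lemma allbr:
  assumes simp: "simple_TP_n_Lie sc n br" and I: "n_Lie_ideal sc n br I" and x: "x \<in> I"
    and ys: "length ys = n - 1"
  shows "h * br (x # ys) \<in> I"
proof -
  have sI: "subspace I" using I by (simp add: n_Lie_ideal_def)
  define S where "S = {a. \<forall>x\<in>I. \<forall>ws h. length ws = n - 2 \<longrightarrow> h * br (x # a # ws) \<in> I}"
  have l1: "length (x # a # ws) = n" if "length ws = n - 2" for x a ws using that n2 by simp
  have sS: "subspace S" unfolding subspace_def S_def
  proof (intro conjI ballI allI impI CollectI)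
    fix x :: 'a and ws :: "'a list" and h :: 'a assume "x \<in> I" "length ws = n - 2"
    then show "h * br (x # 0 # ws) \<in> I"
      using br_zero[of "x # 0 # ws" "Suc 0"] l1[of ws x 0] n2 subspace_0[OF sI] by simp
  next
    fix a b x :: 'a and ws :: "'a list" and h :: 'a assume ab: "a \<in> {a. \<forall>x\<in>I. \<forall>ws h. length ws = n - 2 \<longrightarrow> h * br (x # a # ws) \<in> I}"
      "b \<in> {a. \<forall>x\<in>I. \<forall>ws h. length ws = n - 2 \<longrightarrow> h * br (x # a # ws) \<in> I}"
      and xw: "x \<in> I" "length ws = n - 2"
    have "br (x # (a + b) # ws) = br (x # a # ws) + br (x # b # ws)"
      using br_add[of "x # a # ws" "Suc 0" a b] l1[OF xw(2)] n2 by simp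
    then show "h * br (x # (a + b) # ws) \<in> I"
      using ab xw by (auto simp: distrib_left intro!: subspace_add[OF sI])
  next
    fix c and a x :: 'a and ws :: "'a list" and h :: 'a assume a: "a \<in> {a. \<forall>x\<in>I. \<forall>ws h. length ws = n - 2 \<longrightarrow> h * br (x # a # ws) \<in> I}"
      and xw: "x \<in> I" "length ws = n - 2"
    have "br (x # sc c a # ws) = sc c (br (x # a # ws))"
      using br_scale[of "x # a # ws" "Suc 0" c a] l1[OF xw(2)] n2 by simp
    then show "h * br (x # sc c a # ws) \<in> I"
      using a xw by (auto simp: msc_r intro!: subspace_scale[OF sI])
  qed
  have BS: "{br zs | zs. length zs = n} \<subseteq> S"
  proof
    fix b assume "b \<in> {br zs | zs. length zs = n}"
    then obtain zs where zs: "length zs = n" "b = br zs" by blast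
    show "b \<in> S" unfolding S_def zs(2) using key2[OF I _ zs(1)] by blast
  qed
  have "span {br zs | zs. length zs = n} \<subseteq> S" by (rule span_minimal[OF BS sS])
  then have SU: "S = UNIV" using span_all[OF simp] by blast
  obtain a ws where aw: "ys = a # ws" "length ws = n - 2" using ys n2
    by (cases ys) auto
  have "a \<in> S" using SU by blast
  then show ?thesis using x aw unfolding S_def by blast
qed

lemma br0: "length ys = n - 1 \<Longrightarrow> br (0 # ys) = 0"
  using br_zero[of "0 # ys" 0] n2 by simp

lemma center_ideal:
  "TP_ideal sc n br {x. \<forall>ys. length ys = n - 1 \<longrightarrow> br (x # ys) = 0}"
proof -
  let ?C = "{x. \<forall>ys. length ys = n - 1 \<longrightarrow> br (x # ys) = 0}"
  have l: "length (a # ys) = n" if "length ys = n - 1" for a ys using that n2 by simp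
  have sub: "subspace ?C" unfolding subspace_def
  proof (intro conjI ballI allI impI CollectI)
    fix ys :: "'a list" assume "length ys = n - 1" then show "br (0 # ys) = 0" by (rule br0)
  next
    fix a b :: 'a and ys :: "'a list" assume a: "a \<in> ?C" and b: "b \<in> ?C" and ys: "length ys = n - 1"
    have "br ((a + b) # ys) = br (a # ys) + br (b # ys)"
      using br_add[of "a # ys" 0 a b] l[OF ys] n2 by simp
    then show "br ((a + b) # ys) = 0" using a b ys by simp
  next
    fix c and a :: 'a and ys :: "'a list" assume a: "a \<in> ?C" and ys: "length ys = n - 1"
    have "br (sc c a # ys) = sc c (br (a # ys))"
      using br_scale[of "a # ys" 0 c a] l[OF ys] n2 by simp
    then show "br (sc c a # ys) = 0" using a ys by simp
  qed
  have prod: "h * x \<in> ?C" if x: "x \<in> ?C" for h x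
  proof (intro CollectI allI impI)
    fix ys :: "'a list" assume ys: "length ys = n - 1"
    obtain m where m: "n = Suc m" using n2 by (cases n) auto
    have "sc (of_nat n) (h * br (x # ys)) = (\<Sum>i<n. br ((x # ys)[i := h * ((x # ys) ! i)]))"
      by (rule tpid[OF l[OF ys]])
    also have "\<dots> = br ((h * x) # ys) + (\<Sum>i<m. br (x # ys[i := h * (ys ! i)]))"
      unfolding m sum.lessThan_Suc_shift by simp
    also have "(\<Sum>i<m. br (x # ys[i := h * (ys ! i)])) = 0"
      using x ys by (intro sum.neutral) simp
    finally show "br ((h * x) # ys) = 0" using x ys by simp
  qed
  show ?thesis unfolding TP_ideal_def using sub prod
    by (auto simp: br0)
qed

lemma K_ideal:
  assumes simp: "simple_TP_n_Lie sc n br" and I: "n_Lie_ideal sc n br I"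
  shows "TP_ideal sc n br {x \<in> I. \<forall>h. h * x \<in> I}"
proof -
  have sI: "subspace I" and id: "\<And>x ys. x \<in> I \<Longrightarrow> length ys = n - 1 \<Longrightarrow> br (x # ys) \<in> I"
    using I by (auto simp: n_Lie_ideal_def)
  have sub: "subspace {x \<in> I. \<forall>h. h * x \<in> I}" unfolding subspace_def
    using subspace_0[OF sI] subspace_add[OF sI] subspace_scale[OF sI]
    by (auto simp: distrib_left msc_r)
  have p: "k * x \<in> {x \<in> I. \<forall>h. h * x \<in> I}" if "x \<in> {x \<in> I. \<forall>h. h * x \<in> I}" for k x
  proof -
    have "\<forall>h. h * (k * x) \<in> I" using that by (metis (no_types, lifting) mem_Collect_eq mult.assoc)
    then show ?thesis using that by blast
  qed
  have b: "br (x # ys) \<in> {x \<in> I. \<forall>h. h * x \<in> I}"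
    if "x \<in> {x \<in> I. \<forall>h. h * x \<in> I}" "length ys = n - 1" for x ys
    using that allbr[OF simp I, of x ys] id[of x ys] by blast
  show ?thesis unfolding TP_ideal_def
    using sub p b by blast
qed

lemma main_loc: "simple_TP_n_Lie sc n br \<longleftrightarrow> simple_n_Lie sc n br"
proof
  assume sl: "simple_n_Lie sc n br"
  show "simple_TP_n_Lie sc n br"
  proof -
    have "n_Lie_ideal sc n br J" if "TP_ideal sc n br J" for J
      using that unfolding TP_ideal_def n_Lie_ideal_def by blast
    then show ?thesis using sl unfolding simple_n_Lie_def simple_TP_n_Lie_def by blast
  qed
next
  assume st: "simple_TP_n_Lie sc n br"
  have nt: "nontrivial_bracket n br" using st by (simp add: simple_TP_n_Lie_def)
  have "I = {0} \<or> I = UNIV" if I: "n_Lie_ideal sc n br I" for I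
  proof -
    have sI: "subspace I" using I by (simp add: n_Lie_ideal_def)
    let ?K = "{x \<in> I. \<forall>h. h * x \<in> I}"
    let ?C = "{x. \<forall>ys. length ys = n - 1 \<longrightarrow> br (x # ys) = 0}"
    have "?K = {0} \<or> ?K = UNIV" using K_ideal[OF st I] st by (simp add: simple_TP_n_Lie_def)
    then show ?thesis
    proof
      assume "?K = UNIV" then show ?thesis by blast
    next
      assume K0: "?K = {0}"
      have "I \<subseteq> ?C"
      proof
        fix x assume x: "x \<in> I"
        show "x \<in> ?C"
        proof (intro CollectI allI impI)
          fix ys :: "'a list" assume ys: "length ys = n - 1"
          have "br (x # ys) \<in> ?K" using allbr[OF st I x ys] I x ys by (auto simp: n_Lie_ideal_def)
          then show "br (x # ys) = 0" using K0 by blast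
        qed
      qed
      moreover have "?C = {0} \<or> ?C = UNIV" using center_ideal st by (simp add: simple_TP_n_Lie_def)
      moreover have "?C \<noteq> UNIV"
      proof
        assume "?C = UNIV"
        obtain xs where xs: "length xs = n" "br xs \<noteq> 0" using nt by (auto simp: nontrivial_bracket_def)
        then obtain a ys where axs: "xs = a # ys" using n2 by (cases xs) auto
        have "a \<in> ?C" using \<open>?C = UNIV\<close> by blast
        moreover have "length ys = n - 1" using xs(1) axs by simp
        ultimately have "br (a # ys) = 0" by blast
        then show False using xs(2) axs by simp
      qed
      ultimately have "I \<subseteq> {0}" by blast
      then show ?thesis using subspace_0[OF sI] by blast
    qed
  qed
  then show "simple_n_Lie sc n br" using nt by (simp add: simple_n_Lie_def)
qed

end

theorem mainTheorem7:
  fixes sc :: "complex \<Rightarrow> 'a::comm_ring \<Rightarrow> 'a" and n :: nat and br :: "'a list \<Rightarrow> 'a"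
  assumes "n \<ge> 2"
    and "transposed_Poisson_n_Lie sc n br"
  shows "simple_TP_n_Lie sc n br \<longleftrightarrow> simple_n_Lie sc n br"
proof -
  interpret tpl sc n br using assms by unfold_locales
  show ?thesis by (rule main_loc)
qed

end
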